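(* Every $d$-variate narrow-sense geometric law is a $d$-variate wide-sense geometric law. For $d=2$ this inclusion is proper: the function $\bar F_{n_1,n_2}=(1/2)^{\max(n_1,n_2)}(2/5)^{\min(n_1,n_2)}$, $n_1,n_2\in\mathbb{N}_0$, is the survival function of an exchangeable bivariate wide-sense geometric law which is not narrow-sense geometric; its correlation coefficient equals $-1/8$.
   Context: $\mathbb{N}_0=\{0,1,\ldots\}$. Narrow-sense geometric law: for $p_I\in[0,1]$, $\emptyset\ne I\subseteq\{1,\ldots,d\}$, with $\prod_{I\ni k}p_I<1$, independent $E_I$ with $\mathbb{P}(E_I>n)=p_I^n$, $\tau_k=\min\{E_I:k\in I\}$. Wide-sense geometric law: for $\tilde p_I\in[0,1]$, $I\subseteq\{1,\ldots,d\}$, $\sum_I\tilde p_I=1$, $\sum_{I\not\ni k}\tilde p_I<1$, run i.i.d. trials with outcome $I$ of probability $\tilde p_I$, $\tilde E_I$ the first trial with outcome $I$, $\tau_k=\min\{\tilde E_I:k\in I\}$. *)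

theory Defs
  imports "HOL-Probability.Probability" "HOL-Probability.Product_PMF" "HOL-Probability.Stream_Space"
begin

text \<open>Laws of random vectors (tau_1,...,tau_d) are measures on the space of
  (extensional) functions {1..d} -> enat.\<close>
definition law_space :: "nat \<Rightarrow> (nat \<Rightarrow> enat) measure" where
  "law_space d = PiM {1..d} (\<lambda>_. count_space UNIV)"

text \<open>E with P(E > n) = p^n for n in N_0 (E = infinity a.s. if p = 1).\<close>
definition geom_enat :: "real \<Rightarrow> enat pmf" where
  "geom_enat p = (if p = 1 then return_pmf \<infinity>
                  else map_pmf (\<lambda>n. enat (Suc n)) (geometric_pmf (1 - p)))"

definition narrow_params :: "nat \<Rightarrow> (nat set \<Rightarrow> real) \<Rightarrow> bool" where
  "narrow_params d p \<longleftrightarrow>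
     (\<forall>I. I \<subseteq> {1..d} \<and> I \<noteq> {} \<longrightarrow> 0 \<le> p I \<and> p I \<le> 1) \<and>
     (\<forall>k\<in>{1..d}. (\<Prod>I\<in>{I. I \<subseteq> {1..d} \<and> k \<in> I}. p I) < 1)"

definition narrow_law :: "nat \<Rightarrow> (nat set \<Rightarrow> real) \<Rightarrow> (nat \<Rightarrow> enat) measure" where
  "narrow_law d p =
     distr (measure_pmf (Pi_pmf {I. I \<subseteq> {1..d} \<and> I \<noteq> {}} \<infinity> (\<lambda>I. geom_enat (p I))))
           (law_space d)
           (\<lambda>E. \<lambda>k\<in>{1..d}. Min (E ` {I. I \<subseteq> {1..d} \<and> k \<in> I}))"

definition wide_params :: "nat \<Rightarrow> (nat set \<Rightarrow> real) \<Rightarrow> bool" where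
  "wide_params d q \<longleftrightarrow>
     (\<forall>I. I \<subseteq> {1..d} \<longrightarrow> 0 \<le> q I \<and> q I \<le> 1) \<and>
     (\<Sum>I\<in>Pow {1..d}. q I) = 1 \<and>
     (\<forall>k\<in>{1..d}. (\<Sum>I\<in>{I. I \<subseteq> {1..d} \<and> k \<notin> I}. q I) < 1)"

definition trial_pmf :: "nat \<Rightarrow> (nat set \<Rightarrow> real) \<Rightarrow> nat set pmf" where
  "trial_pmf d q = embed_pmf (\<lambda>I. if I \<subseteq> {1..d} then q I else 0)"

text \<open>Index (counting from 1) of the first trial with outcome I; infinity if none.
  Trial number n+1 is the stream element at position n.\<close>
definition first_occ :: "nat set stream \<Rightarrow> nat set \<Rightarrow> enat" where
  "first_occ \<omega> I = (if \<exists>n. \<omega> !! n = I then enat (Suc (LEAST n. \<omega> !! n = I)) else \<infinity>)"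

definition wide_law :: "nat \<Rightarrow> (nat set \<Rightarrow> real) \<Rightarrow> (nat \<Rightarrow> enat) measure" where
  "wide_law d q =
     distr (stream_space (measure_pmf (trial_pmf d q))) (law_space d)
           (\<lambda>\<omega>. \<lambda>k\<in>{1..d}. Min (first_occ \<omega> ` {I. I \<subseteq> {1..d} \<and> k \<in> I}))"

definition is_narrow_law :: "nat \<Rightarrow> (nat \<Rightarrow> enat) measure \<Rightarrow> bool" where
  "is_narrow_law d L \<longleftrightarrow> (\<exists>p. narrow_params d p \<and> L = narrow_law d p)"

definition is_wide_law :: "nat \<Rightarrow> (nat \<Rightarrow> enat) measure \<Rightarrow> bool" where
  "is_wide_law d L \<longleftrightarrow> (\<exists>q. wide_params d q \<and> L = wide_law d q)"

definition correlation :: "'a measure \<Rightarrow> ('a \<Rightarrow> real) \<Rightarrow> ('a \<Rightarrow> real) \<Rightarrow> real" where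
  "correlation M X Y =
     (let mX = integral\<^sup>L M X; mY = integral\<^sup>L M Y in
      (\<integral>x. (X x - mX) * (Y x - mY) \<partial>M) /
      sqrt ((\<integral>x. (X x - mX)^2 \<partial>M) * (\<integral>x. (Y x - mY)^2 \<partial>M)))"

end

theory Submission
  imports Defs
begin


lemma space_law: "space (law_space d) = PiE {1..d} (\<lambda>_. UNIV)"
  by (simp add: law_space_def space_PiM)

lemma countable_space_law: "countable (space (law_space d))"
  unfolding space_law by (intro countable_PiE) auto

lemma sets_law: "sets (law_space d) = Pow (space (law_space d))"
proof
  show "sets (law_space d) \<subseteq> Pow (space (law_space d))"
    using sets.sets_into_space by auto
next
  show "Pow (space (law_space d)) \<subseteq> sets (law_space d)"
  proof
    fix a assume a: "a \<in> Pow (space (law_space d))"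
    have sing: "{x} \<in> sets (law_space d)" if "x \<in> space (law_space d)" for x
    proof -
      have "{x} = PiE {1..d} (\<lambda>i. {x i})"
        using that apply (auto simp: space_law PiE_iff extensional_def fun_eq_iff)
        by (metis atLeastAtMost_iff One_nat_def)
      also have "\<dots> \<in> sets (law_space d)"
        unfolding law_space_def by (intro sets_PiM_I_finite) auto
      finally show ?thesis .
    qed
    have "a = (\<Union>x\<in>a. {x})" by auto
    also have "\<dots> \<in> sets (law_space d)"
      using a countable_space_law[of d]
      by (intro sets.countable_UN'') (auto intro: countable_subset sing)
    finally show "a \<in> sets (law_space d)" .
  qed
qed

definition upset :: "nat \<Rightarrow> (nat \<Rightarrow> nat) \<Rightarrow> (nat \<Rightarrow> enat) set" where
  "upset d n = {x \<in> space (law_space d). \<forall>k\<in>{1..d}. enat (n k) \<le> x k}"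

lemma sigma_upset: "sets (law_space d) = sigma_sets (space (law_space d)) (range (upset d))"
proof
  let ?\<Omega> = "space (law_space d)"
  interpret S: sigma_algebra ?\<Omega> "sigma_sets ?\<Omega> (range (upset d))"
    by (rule sigma_algebra_sigma_sets) (auto simp: upset_def)
  have U: "upset d n \<in> sigma_sets ?\<Omega> (range (upset d))" for n by auto
  have sing: "{x} \<in> sigma_sets ?\<Omega> (range (upset d))" if x: "x \<in> ?\<Omega>" for x
  proof -
    define V where "V = (\<Inter>m. upset d (\<lambda>k. if x k = \<infinity> then m else the_enat (x k)))"
    define W where "W = (\<Union>j\<in>{j\<in>{1..d}. x j \<noteq> \<infinity>}. upset d (\<lambda>k. if k = j then Suc (the_enat (x j)) else 0))"
    have V: "V \<in> sigma_sets ?\<Omega> (range (upset d))"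
      unfolding V_def by (intro S.countable_INT) auto
    have W: "W \<in> sigma_sets ?\<Omega> (range (upset d))"
      unfolding W_def by (intro S.finite_UN) auto
    have Veq: "V = {y \<in> ?\<Omega>. \<forall>k\<in>{1..d}. x k \<le> y k}"
    proof (rule set_eqI, rule iffI)
      fix y assume "y \<in> V"
      then have yO: "y \<in> ?\<Omega>"
        and h: "\<And>m k. k \<in> {1..d} \<Longrightarrow> enat (if x k = \<infinity> then m else the_enat (x k)) \<le> y k"
        unfolding V_def upset_def by auto
      have "x k \<le> y k" if k: "k \<in> {1..d}" for k
      proof (cases "x k = \<infinity>")
        case True
        then have h': "\<And>m. enat m \<le> y k" using h[OF k] by simp
        have "y k = \<infinity>"
        proof (rule ccontr)
          assume "y k \<noteq> \<infinity>" then obtain r where "y k = enat r" by auto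
          with h'[of "Suc r"] show False by simp
        qed
        then show ?thesis by simp
      next
        case False then show ?thesis using h[OF k, of 0] by auto
      qed
      then show "y \<in> {y \<in> ?\<Omega>. \<forall>k\<in>{1..d}. x k \<le> y k}" using yO by auto
    next
      fix y assume y: "y \<in> {y \<in> ?\<Omega>. \<forall>k\<in>{1..d}. x k \<le> y k}"
      have "enat (if x k = \<infinity> then m else the_enat (x k)) \<le> y k" if "k \<in> {1..d}" for m k
      proof -
        have "x k \<le> y k" using y that by auto
        then show ?thesis by (cases "x k") auto
      qed
      then show "y \<in> V" using y unfolding V_def upset_def by auto
    qed
    have "{x} = V - W"
    proof
      have "x \<in> V" using x by (simp add: Veq)
      moreover have "x \<notin> W"
      proof
        assume "x \<in> W"
        then obtain j where j: "j \<in> {1..d}" "x j \<noteq> \<infinity>"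
          and "x \<in> upset d (\<lambda>k. if k = j then Suc (the_enat (x j)) else 0)"
          unfolding W_def by blast
        then have "enat (if j = j then Suc (the_enat (x j)) else 0) \<le> x j" unfolding upset_def by blast
        then have "enat (Suc (the_enat (x j))) \<le> x j" by simp
        with j(2) show False by (cases "x j") auto
      qed
      ultimately show "{x} \<subseteq> V - W" by blast
    next
      show "V - W \<subseteq> {x}"
      proof
        fix y assume y: "y \<in> V - W"
        have "y k = x k" if k: "k \<in> {1..d}" for k
        proof (rule ccontr)
          assume ne: "y k \<noteq> x k"
          have le: "x k \<le> y k" using y k by (auto simp: Veq)
          then have "x k < y k" using ne by auto
          then have fin: "x k \<noteq> \<infinity>" by (cases "x k") auto
          then have "enat (Suc (the_enat (x k))) \<le> y k"
            using \<open>x k < y k\<close> fin by (cases "x k") (auto simp: Suc_ile_eq)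
          moreover have "y \<in> ?\<Omega>" using y by (auto simp: Veq)
          ultimately have "y \<in> upset d (\<lambda>j. if j = k then Suc (the_enat (x k)) else 0)"
            unfolding upset_def by (auto simp: enat_0)
          then have "y \<in> W" unfolding W_def using k fin by blast
          then show False using y by auto
        qed
        note eqk = this
        have yO: "y \<in> ?\<Omega>" using y by (auto simp: Veq)
        have "y = x"
          using yO x unfolding space_law by (rule PiE_ext) (rule eqk)
        then show "y \<in> {x}" by simp
      qed
    qed
    then show ?thesis using V W by auto
  qed
  show "sets (law_space d) \<subseteq> sigma_sets ?\<Omega> (range (upset d))"
  proof
    fix a assume "a \<in> sets (law_space d)"
    then have a: "a \<subseteq> ?\<Omega>" using sets.sets_into_space by auto
    have "a = (\<Union>x\<in>a. {x})" by auto
    also have "\<dots> \<in> sigma_sets ?\<Omega> (range (upset d))"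
      using a countable_space_law[of d]
      by (intro S.countable_UN'') (auto intro: countable_subset sing)
    finally show "a \<in> sigma_sets ?\<Omega> (range (upset d))" .
  qed
next
  show "sigma_sets (space (law_space d)) (range (upset d)) \<subseteq> sets (law_space d)"
    by (rule sets.sigma_sets_subset) (auto simp: sets_law upset_def)
qed

lemma law_eqI:
  assumes M: "sets M = sets (law_space d)" and N: "sets N = sets (law_space d)"
    and fin: "emeasure M (space (law_space d)) \<noteq> \<infinity>"
    and eq: "\<And>n. emeasure M (upset d n) = emeasure N (upset d n)"
  shows "M = N"
proof (rule measure_eqI_generator_eq[where E="range (upset d)" and \<Omega>="space (law_space d)" and A="\<lambda>_. upset d (\<lambda>_. 0)"])
  show "Int_stable (range (upset d))"
  proof (rule Int_stableI)
    fix a b assume "a \<in> range (upset d)" "b \<in> range (upset d)"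
    then obtain n m where "a = upset d n" "b = upset d m" by auto
    moreover have mx: "\<And>a b (x::enat). enat (max a b) \<le> x \<longleftrightarrow> enat a \<le> x \<and> enat b \<le> x"
      by (case_tac "a \<le> b"; auto simp: max_def; metis enat_ord_simps(1) order_trans nat_le_linear)
    moreover have "upset d n \<inter> upset d m = upset d (\<lambda>k. max (n k) (m k))"
      unfolding upset_def mx by blast
    ultimately show "a \<inter> b \<in> range (upset d)" by auto
  qed
  show "range (upset d) \<subseteq> Pow (space (law_space d))" by (auto simp: upset_def)
  show "\<And>X. X \<in> range (upset d) \<Longrightarrow> emeasure M X = emeasure N X" using eq by auto
  show "sets M = sigma_sets (space (law_space d)) (range (upset d))" using M sigma_upset by simp
  show "sets N = sigma_sets (space (law_space d)) (range (upset d))" using N sigma_upset by simp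
  have sp: "upset d (\<lambda>_. 0) = space (law_space d)" by (auto simp: upset_def enat_0)
  show "range (\<lambda>_. upset d (\<lambda>_. 0)) \<subseteq> range (upset d)" by auto
  show "(\<Union>i. upset d (\<lambda>_. 0)) = space (law_space d)" using sp by simp
  show "\<And>i. emeasure M (upset d (\<lambda>_. 0)) \<noteq> \<infinity>" using sp fin by simp
qed


lemma geom_sum: "(\<Sum>k<j. (p::real)^k * (1 - p)) = 1 - p^j"
  by (induction j) (auto simp: algebra_simps)

lemma geometric_ge:
  assumes "0 \<le> p" "p < (1::real)"
  shows "measure_pmf.prob (geometric_pmf (1 - p)) {n. j \<le> n} = p ^ j"
proof -
  have "{n. j \<le> n} = space (measure_pmf (geometric_pmf (1 - p))) - {..<j}" by auto
  then have "measure_pmf.prob (geometric_pmf (1 - p)) {n. j \<le> n}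
      = 1 - measure_pmf.prob (geometric_pmf (1 - p)) {..<j}"
    using measure_pmf.prob_compl[of "{..<j}" "geometric_pmf (1 - p)"] by simp
  also have "measure_pmf.prob (geometric_pmf (1 - p)) {..<j} = (\<Sum>k<j. p^k * (1 - p))"
    using assms by (simp add: measure_measure_pmf_finite)
  finally show ?thesis by (simp add: geom_sum)
qed

lemma geom_enat_ge:
  assumes "0 \<le> p" "p \<le> (1::real)"
  shows "measure_pmf.prob (geom_enat p) {e. enat m \<le> e} = p ^ (m - 1)"
proof (cases "p = 1")
  case True then show ?thesis by (simp add: geom_enat_def measure_return_pmf indicator_def)
next
  case False
  then have p: "p < 1" using assms by simp
  have "measure_pmf.prob (geom_enat p) {e. enat m \<le> e}
      = measure_pmf.prob (geometric_pmf (1 - p)) ((\<lambda>n. enat (Suc n)) -` {e. enat m \<le> e})"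
    using False by (simp add: geom_enat_def measure_map_pmf)
  also have "(\<lambda>n. enat (Suc n)) -` {e. enat m \<le> e} = {n. m - 1 \<le> n}" by auto
  also have "measure_pmf.prob (geometric_pmf (1 - p)) {n. m - 1 \<le> n} = p ^ (m - 1)"
    by (rule geometric_ge[OF assms(1) p])
  finally show ?thesis .
qed

definition NS :: "nat \<Rightarrow> nat set set" where
  "NS d = {I. I \<subseteq> {1..d} \<and> I \<noteq> {}}"

lemma finite_NS[simp]: "finite (NS d)"
  by (rule finite_subset[of _ "Pow {1..d}"]) (auto simp: NS_def)

lemma narrow_survival:
  assumes p: "\<forall>I. I \<subseteq> {1..d} \<and> I \<noteq> {} \<longrightarrow> 0 \<le> p I \<and> p I \<le> 1"
  shows "emeasure (narrow_law d p) (upset d n) = ennreal (\<Prod>I\<in>NS d. p I ^ (Max (n ` I) - 1))"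
proof -
  let ?P = "Pi_pmf {I. I \<subseteq> {1..d} \<and> I \<noteq> {}} \<infinity> (\<lambda>I. geom_enat (p I))"
  let ?f = "\<lambda>E. \<lambda>k\<in>{1..d}. Min (E ` {I. I \<subseteq> {1..d} \<and> k \<in> I})"
  define B where "B = (\<lambda>I. {e. enat (Max (n ` I)) \<le> e})"
  have U: "upset d n \<in> sets (law_space d)" by (auto simp: sets_law upset_def)
  have meas: "?f \<in> measurable (measure_pmf ?P) (law_space d)"
    by (auto simp: space_law)
  have fin: "finite {I. I \<subseteq> {1..d} \<and> k \<in> I}" for k
    by (rule finite_subset[of _ "Pow {1..d}"]) auto
  have pre: "?f -` upset d n \<inter> space (measure_pmf ?P) = Pi (NS d) B"
  proof (rule set_eqI, rule iffI)
    fix E assume "E \<in> ?f -` upset d n \<inter> space (measure_pmf ?P)"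
    then have h: "\<And>k. k \<in> {1..d} \<Longrightarrow> enat (n k) \<le> Min (E ` {I. I \<subseteq> {1..d} \<and> k \<in> I})"
      by (auto simp: upset_def)
    show "E \<in> Pi (NS d) B"
    proof
      fix I assume I: "I \<in> NS d"
      then have "finite I" "I \<noteq> {}" by (auto simp: NS_def intro: finite_subset)
      then obtain k where k: "k \<in> I" "Max (n ` I) = n k"
        by (metis (no_types, lifting) Max_in finite_imageI image_iff image_is_empty)
      have kd: "k \<in> {1..d}" using I k by (auto simp: NS_def)
      have "Min (E ` {I. I \<subseteq> {1..d} \<and> k \<in> I}) \<le> E I"
        using fin[of k] I k by (intro Min_le) (auto simp: NS_def)
      then have "enat (n k) \<le> E I"
        using h[OF kd] by (rule order_trans[rotated])
      then show "E I \<in> B I" using k by (simp add: B_def)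
    qed
  next
    fix E assume E: "E \<in> Pi (NS d) B"
    have "enat (n k) \<le> Min (E ` {I. I \<subseteq> {1..d} \<and> k \<in> I})" if k: "k \<in> {1..d}" for k
    proof -
      have ne: "E ` {I. I \<subseteq> {1..d} \<and> k \<in> I} \<noteq> {}" using k by auto
      have "enat (n k) \<le> E I" if I: "I \<subseteq> {1..d}" "k \<in> I" for I
      proof -
        have "I \<in> NS d" using I by (auto simp: NS_def)
        then have "enat (Max (n ` I)) \<le> E I" using E by (auto simp: B_def)
        moreover have "n k \<le> Max (n ` I)" using I finite_subset[OF I(1)] by auto
        ultimately show ?thesis by (meson enat_ord_simps(1) order_trans)
      qed
      then show ?thesis using ne fin[of k] by (auto simp: Min_ge_iff)
    qed
    then show "E \<in> ?f -` upset d n \<inter> space (measure_pmf ?P)"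
      by (auto simp: upset_def space_law)
  qed
  have "emeasure (narrow_law d p) (upset d n) = emeasure (measure_pmf ?P) (Pi (NS d) B)"
    unfolding narrow_law_def using meas U pre by (simp add: emeasure_distr)
  also have "\<dots> = ennreal (measure_pmf.prob ?P (Pi (NS d) B))"
    by (simp add: measure_pmf.emeasure_eq_measure)
  also have "measure_pmf.prob ?P (Pi (NS d) B) = (\<Prod>I\<in>NS d. measure_pmf.prob (geom_enat (p I)) (B I))"
    unfolding NS_def by (rule measure_Pi_pmf_Pi) (simp add: NS_def[symmetric])
  also have "\<dots> = (\<Prod>I\<in>NS d. p I ^ (Max (n ` I) - 1))"
    using p by (intro prod.cong refl) (auto simp: B_def NS_def geom_enat_ge)
  finally show ?thesis .
qed


lemma stream_prefix_emeasure:
  fixes M :: "'a pmf"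
  shows "emeasure (stream_space (measure_pmf M)) {\<omega>\<in>space (stream_space (measure_pmf M)). \<forall>i<m. \<omega> !! i \<in> A i}
       = (\<Prod>i<m. emeasure (measure_pmf M) (A i))"
proof (induction m arbitrary: A)
  case 0
  interpret S: prob_space "stream_space (measure_pmf M)"
    by (rule prob_space.prob_space_stream_space) (rule prob_space_measure_pmf)
  show ?case by (simp add: S.emeasure_space_1)
next
  case (Suc m)
  have meas: "{\<omega>\<in>space (stream_space (measure_pmf M)). \<forall>i<k. \<omega> !! i \<in> B i} \<in> sets (stream_space (measure_pmf M))" for k B
  proof -
    have "{\<omega>\<in>space (stream_space (measure_pmf M)). \<forall>i\<in>{..<k}. \<omega> !! i \<in> B i} \<in> sets (stream_space (measure_pmf M))"
    proof (rule sets.sets_Collect_finite_All)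
      fix i
      have "{\<omega>\<in>space (stream_space (measure_pmf M)). \<omega> !! i \<in> B i} = (\<lambda>\<omega>. \<omega> !! i) -` B i \<inter> space (stream_space (measure_pmf M))"
        by blast
      also have "\<dots> \<in> sets (stream_space (measure_pmf M))"
        by (rule measurable_sets[OF measurable_snth]) simp
      finally show "{\<omega>\<in>space (stream_space (measure_pmf M)). \<omega> !! i \<in> B i} \<in> sets (stream_space (measure_pmf M))" .
    qed simp
    then show ?thesis by (simp only: Ball_def lessThan_iff)
  qed
  have "emeasure (stream_space (measure_pmf M)) {\<omega>\<in>space (stream_space (measure_pmf M)). \<forall>i<Suc m. \<omega> !! i \<in> A i}
     = (\<integral>\<^sup>+t. emeasure (stream_space (measure_pmf M)) {x\<in>space (stream_space (measure_pmf M)). t ## x \<in> {\<omega>\<in>space (stream_space (measure_pmf M)). \<forall>i<Suc m. \<omega> !! i \<in> A i}} \<partial>measure_pmf M)"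
    by (rule prob_space.emeasure_stream_space[OF prob_space_measure_pmf meas])
  also have "\<dots> = (\<integral>\<^sup>+t. indicator (A 0) t * emeasure (stream_space (measure_pmf M)) {x\<in>space (stream_space (measure_pmf M)). \<forall>i<m. x !! i \<in> A (Suc i)} \<partial>measure_pmf M)"
  proof (rule nn_integral_cong)
    fix t assume "t \<in> space (measure_pmf M)"
    have sp: "x \<in> space (stream_space (measure_pmf M)) \<Longrightarrow> t ## x \<in> space (stream_space (measure_pmf M))" for x
      by (simp add: space_stream_space)
    have "{x\<in>space (stream_space (measure_pmf M)). t ## x \<in> {\<omega>\<in>space (stream_space (measure_pmf M)). \<forall>i<Suc m. \<omega> !! i \<in> A i}}
       = (if t \<in> A 0 then {x\<in>space (stream_space (measure_pmf M)). \<forall>i<m. x !! i \<in> A (Suc i)} else {})"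
      using sp by (auto simp: All_less_Suc2)
    then show "emeasure (stream_space (measure_pmf M)) {x\<in>space (stream_space (measure_pmf M)). t ## x \<in> {\<omega>\<in>space (stream_space (measure_pmf M)). \<forall>i<Suc m. \<omega> !! i \<in> A i}} =
         indicator (A 0) t * emeasure (stream_space (measure_pmf M)) {x\<in>space (stream_space (measure_pmf M)). \<forall>i<m. x !! i \<in> A (Suc i)}"
      by (simp add: indicator_def)
  qed
  also have "\<dots> = emeasure (measure_pmf M) (A 0) * (\<Prod>i<m. emeasure (measure_pmf M) (A (Suc i)))"
    using Suc[of "\<lambda>i. A (Suc i)"] by (simp add: nn_integral_multc)
  also have "\<dots> = (\<Prod>i<Suc m. emeasure (measure_pmf M) (A i))"
    by (rule prod.lessThan_Suc_shift[symmetric])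
  finally show ?case .
qed

lemma pmf_trial:
  assumes "wide_params d q"
  shows "pmf (trial_pmf d q) I = (if I \<subseteq> {1..d} then q I else 0)"
proof -
  let ?f = "\<lambda>I. if I \<subseteq> {1..d} then q I else 0"
  have nn: "\<And>x. 0 \<le> ?f x" using assms by (auto simp: wide_params_def)
  have "(\<integral>\<^sup>+x. ennreal (?f x) \<partial>count_space UNIV) = (\<Sum>x\<in>Pow {1..d}. ennreal (?f x))"
    by (rule nn_integral_count_space') auto
  also have "\<dots> = ennreal (\<Sum>x\<in>Pow {1..d}. ?f x)" using nn by (simp only: sum_ennreal)
  also have "(\<Sum>x\<in>Pow {1..d}. ?f x) = (\<Sum>x\<in>Pow {1..d}. q x)" by (intro sum.cong) auto
  also have "\<dots> = 1" using assms by (simp add: wide_params_def)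
  finally have "(\<integral>\<^sup>+x. ennreal (?f x) \<partial>count_space UNIV) = 1" by simp
  then show ?thesis unfolding trial_pmf_def using nn by (subst pmf_embed_pmf) auto
qed

lemma emeasure_trial:
  assumes "wide_params d q"
  shows "emeasure (measure_pmf (trial_pmf d q)) A = ennreal (\<Sum>I\<in>{I\<in>Pow {1..d}. I \<in> A}. q I)"
proof -
  let ?M = "trial_pmf d q"
  have sub: "set_pmf ?M \<subseteq> Pow {1..d}"
  proof
    fix I assume "I \<in> set_pmf ?M"
    then have "pmf ?M I \<noteq> 0" by (simp add: set_pmf_iff)
    then have "I \<subseteq> {1..d}" using pmf_trial[OF assms, of I] by (cases "I \<subseteq> {1..d}") auto
    then show "I \<in> Pow {1..d}" by simp
  qed
  have "emeasure (measure_pmf ?M) A = emeasure (measure_pmf ?M) (A \<inter> set_pmf ?M)"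
    by (simp add: emeasure_Int_set_pmf)
  also have "A \<inter> set_pmf ?M = {I\<in>Pow {1..d}. I \<in> A} \<inter> set_pmf ?M" using sub by auto
  also have "emeasure (measure_pmf ?M) \<dots> = emeasure (measure_pmf ?M) {I\<in>Pow {1..d}. I \<in> A}"
    by (simp add: emeasure_Int_set_pmf)
  also have "\<dots> = (\<Sum>I\<in>{I\<in>Pow {1..d}. I \<in> A}. ennreal (pmf ?M I))"
    by (subst emeasure_measure_pmf_finite) auto
  also have "\<dots> = (\<Sum>I\<in>{I\<in>Pow {1..d}. I \<in> A}. ennreal (q I))"
    using assms by (intro sum.cong) (auto simp: pmf_trial)
  also have "\<dots> = ennreal (\<Sum>I\<in>{I\<in>Pow {1..d}. I \<in> A}. q I)"
    using assms by (intro sum_ennreal) (auto simp: wide_params_def)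
  finally show ?thesis .
qed

lemma first_occ_ge: "enat a \<le> first_occ \<omega> I \<longleftrightarrow> (\<forall>i. Suc i < a \<longrightarrow> \<omega> !! i \<noteq> I)"
proof (cases "\<exists>n. \<omega> !! n = I")
  case True
  let ?l = "LEAST n. \<omega> !! n = I"
  have l: "\<omega> !! ?l = I" using True by (rule LeastI_ex)
  have nl: "\<And>i. i < ?l \<Longrightarrow> \<omega> !! i \<noteq> I" using not_less_Least by blast
  have fo: "first_occ \<omega> I = enat (Suc ?l)" using True by (simp add: first_occ_def)
  show ?thesis
  proof
    assume "enat a \<le> first_occ \<omega> I"
    then have "a \<le> Suc ?l" using fo by simp
    then show "\<forall>i. Suc i < a \<longrightarrow> \<omega> !! i \<noteq> I" using nl by auto
  next
    assume h: "\<forall>i. Suc i < a \<longrightarrow> \<omega> !! i \<noteq> I"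
    have "\<not> Suc ?l < a" using h l by blast
    then show "enat a \<le> first_occ \<omega> I" using fo by simp
  qed
next
  case False
  then show ?thesis by (simp add: first_occ_def)
qed

lemma pred_first_occ_ge[measurable]:
  "Measurable.pred (stream_space (measure_pmf M)) (\<lambda>\<omega>. enat a \<le> first_occ \<omega> I)"
  unfolding first_occ_ge by measurable

lemma enat_all_le: assumes "\<forall>m. enat m \<le> x" shows "x = \<infinity>"
proof (cases x)
  case (enat r)
  then have "enat (Suc r) \<le> enat r" using assms by metis
  then show ?thesis by simp
qed simp

lemma pred_first_occ_eq[measurable]:
  "Measurable.pred (stream_space (measure_pmf M)) (\<lambda>\<omega>. first_occ \<omega> I = e)"
proof (cases e)
  case (enat j)
  have "(\<lambda>\<omega>. first_occ \<omega> I = e) = (\<lambda>\<omega>. enat j \<le> first_occ \<omega> I \<and> \<not> enat (Suc j) \<le> first_occ \<omega> I)"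
    using enat by (auto simp: fun_eq_iff Suc_ile_eq)
  then show ?thesis by simp
next
  case infinity
  have "(\<lambda>\<omega>. first_occ \<omega> I = e) = (\<lambda>\<omega>. \<forall>m. enat m \<le> first_occ \<omega> I)"
    using infinity by (auto simp: fun_eq_iff intro: enat_all_le)
  then show ?thesis by simp
qed

definition wmap :: "nat \<Rightarrow> nat set stream \<Rightarrow> (nat \<Rightarrow> enat)" where
  "wmap d = (\<lambda>\<omega>. \<lambda>k\<in>{1..d}. Min (first_occ \<omega> ` {I. I \<subseteq> {1..d} \<and> k \<in> I}))"

lemma wide_law_wmap: "wide_law d q = distr (stream_space (measure_pmf (trial_pmf d q))) (law_space d) (wmap d)"
  by (simp add: wide_law_def wmap_def)

lemma measurable_wmap: "wmap d \<in> measurable (stream_space (measure_pmf M)) (law_space d)"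
proof -
  let ?S = "stream_space (measure_pmf M)"
  let ?C = "PiE (Pow {1..d}) (\<lambda>_. UNIV :: enat set)"
  define t where "t = (\<lambda>\<omega>. restrict (\<lambda>I. first_occ \<omega> I) (Pow {1..d}))"
  define h where "h = (\<lambda>e. \<lambda>k\<in>{1..d}. Min (e ` {I. I \<subseteq> {1..d} \<and> k \<in> I}) :: enat)"
  have cC: "countable ?C" by (intro countable_PiE) auto
  have t: "t \<in> measurable ?S (count_space ?C)"
  proof (subst measurable_count_space_eq_countable[OF cC], intro conjI ballI)
    show "t \<in> space ?S \<rightarrow> ?C" by (auto simp: t_def)
  next
    fix e assume e: "e \<in> ?C"
    have "t -` {e} \<inter> space ?S = {\<omega>\<in>space ?S. \<forall>I\<in>Pow {1..d}. first_occ \<omega> I = e I}"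
      using e by (auto simp: t_def PiE_iff extensional_def fun_eq_iff)
    also have "\<dots> \<in> sets ?S" by measurable
    finally show "t -` {e} \<inter> space ?S \<in> sets ?S" .
  qed
  have h: "h \<in> measurable (count_space ?C) (law_space d)"
    by (auto simp: h_def space_law)
  have "h \<circ> t \<in> measurable ?S (law_space d)" using t h by (rule measurable_comp)
  moreover have "h \<circ> t = wmap d"
  proof
    fix \<omega>
    have "(\<lambda>k\<in>{1..d}. Min (t \<omega> ` {I. I \<subseteq> {1..d} \<and> k \<in> I})) = (\<lambda>k\<in>{1..d}. Min (first_occ \<omega> ` {I. I \<subseteq> {1..d} \<and> k \<in> I}))"
      by (intro restrict_ext arg_cong[where f=Min] image_cong) (auto simp: t_def)
    then show "(h \<circ> t) \<omega> = wmap d \<omega>" by (simp add: h_def wmap_def)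
  qed
  ultimately show ?thesis by simp
qed

lemma wide_survival:
  assumes q: "wide_params d q"
  shows "emeasure (wide_law d q) (upset d n) =
    ennreal (\<Prod>i<(\<Sum>k\<in>{1..d}. n k). \<Sum>I\<in>{I\<in>Pow {1..d}. \<forall>k\<in>I. n k \<le> Suc i}. q I)"
proof -
  let ?M = "measure_pmf (trial_pmf d q)"
  let ?S = "stream_space ?M"
  define m where "m = (\<Sum>k\<in>{1..d}. n k)"
  define A where "A = (\<lambda>i. {I. I \<subseteq> {1..d} \<longrightarrow> (\<forall>k\<in>I. n k \<le> Suc i)})"
  have nm: "n k \<le> m" if "k \<in> {1..d}" for k
    unfolding m_def using that by (intro member_le_sum) auto
  have U: "upset d n \<in> sets (law_space d)" by (auto simp: sets_law upset_def)
  have fin: "finite {I. I \<subseteq> {1..d} \<and> k \<in> I}" for k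
    by (rule finite_subset[of _ "Pow {1..d}"]) auto
  have pre: "wmap d -` upset d n \<inter> space ?S = {\<omega>\<in>space ?S. \<forall>i<m. \<omega> !! i \<in> A i}"
  proof (rule set_eqI, rule iffI)
    fix \<omega> assume w: "\<omega> \<in> wmap d -` upset d n \<inter> space ?S"
    then have h: "\<And>k. k \<in> {1..d} \<Longrightarrow> enat (n k) \<le> Min (first_occ \<omega> ` {I. I \<subseteq> {1..d} \<and> k \<in> I})"
      by (auto simp: upset_def wmap_def)
    have "\<omega> !! i \<in> A i" for i
      unfolding A_def
    proof (intro CollectI impI ballI)
      fix k assume sub: "\<omega> !! i \<subseteq> {1..d}" and k: "k \<in> \<omega> !! i"
      have kd: "k \<in> {1..d}" using sub k by auto
      have "Min (first_occ \<omega> ` {I. I \<subseteq> {1..d} \<and> k \<in> I}) \<le> first_occ \<omega> (\<omega> !! i)"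
        using fin[of k] sub k by (intro Min_le) auto
      then have "enat (n k) \<le> first_occ \<omega> (\<omega> !! i)" using h[OF kd] by (rule order_trans[rotated])
      then have "\<not> Suc i < n k" unfolding first_occ_ge by blast
      then show "n k \<le> Suc i" by simp
    qed
    then show "\<omega> \<in> {\<omega>\<in>space ?S. \<forall>i<m. \<omega> !! i \<in> A i}" using w by auto
  next
    fix \<omega> assume w: "\<omega> \<in> {\<omega>\<in>space ?S. \<forall>i<m. \<omega> !! i \<in> A i}"
    have "enat (n k) \<le> Min (first_occ \<omega> ` {I. I \<subseteq> {1..d} \<and> k \<in> I})" if k: "k \<in> {1..d}" for k
    proof -
      have "enat (n k) \<le> first_occ \<omega> I" if I: "I \<subseteq> {1..d}" "k \<in> I" for I
        unfolding first_occ_ge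
      proof (intro allI impI notI)
        fix i assume i: "Suc i < n k" and eq: "\<omega> !! i = I"
        have "i < m" using i nm[OF k] by simp
        then have "\<omega> !! i \<in> A i" using w by auto
        then show False using eq I i by (auto simp: A_def)
      qed
      moreover have "first_occ \<omega> ` {I. I \<subseteq> {1..d} \<and> k \<in> I} \<noteq> {}" using k by auto
      ultimately show ?thesis using fin[of k] by (auto simp: Min_ge_iff)
    qed
    then show "\<omega> \<in> wmap d -` upset d n \<inter> space ?S"
      using w by (auto simp: upset_def wmap_def space_law)
  qed
  have "emeasure (wide_law d q) (upset d n) = emeasure ?S {\<omega>\<in>space ?S. \<forall>i<m. \<omega> !! i \<in> A i}"
    unfolding wide_law_wmap using measurable_wmap U pre by (simp add: emeasure_distr)
  also have "\<dots> = (\<Prod>i<m. emeasure ?M (A i))" by (rule stream_prefix_emeasure)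
  also have "\<dots> = (\<Prod>i<m. ennreal (\<Sum>I\<in>{I\<in>Pow {1..d}. \<forall>k\<in>I. n k \<le> Suc i}. q I))"
    by (intro prod.cong refl) (auto simp: emeasure_trial[OF q] A_def intro!: arg_cong[where f=ennreal] sum.cong)
  also have "\<dots> = ennreal (\<Prod>i<m. \<Sum>I\<in>{I\<in>Pow {1..d}. \<forall>k\<in>I. n k \<le> Suc i}. q I)"
    using q by (intro prod_ennreal sum_nonneg) (auto simp: wide_params_def)
  finally show ?thesis by (simp add: m_def)
qed


definition wgt :: "nat \<Rightarrow> (nat set \<Rightarrow> real) \<Rightarrow> nat set set \<Rightarrow> real" where
  "wgt d p F = (\<Prod>J\<in>F. 1 - p J) * (\<Prod>J\<in>NS d - F. p J)"

definition qof :: "nat \<Rightarrow> (nat set \<Rightarrow> real) \<Rightarrow> nat set \<Rightarrow> real" where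
  "qof d p I = (\<Sum>F\<in>{F\<in>Pow (NS d). \<Union>F = I}. wgt d p F)"

lemma qof_nonneg:
  assumes p: "\<forall>I. I \<subseteq> {1..d} \<and> I \<noteq> {} \<longrightarrow> 0 \<le> p I \<and> p I \<le> 1"
  shows "0 \<le> qof d p I"
  unfolding qof_def wgt_def using p
  by (intro sum_nonneg mult_nonneg_nonneg prod_nonneg) (auto simp: NS_def)

lemma qof_key:
  shows "(\<Sum>I\<in>{I\<in>Pow {1..d}. I \<subseteq> T}. qof d p I) = (\<Prod>J\<in>{J\<in>NS d. \<not> J \<subseteq> T}. p J)"
proof -
  define NT where "NT = {J\<in>NS d. J \<subseteq> T}"
  have finNT: "finite NT" unfolding NT_def by simp
  have "(\<Sum>I\<in>{I\<in>Pow {1..d}. I \<subseteq> T}. qof d p I)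
      = (\<Sum>I\<in>{I\<in>Pow {1..d}. I \<subseteq> T}. \<Sum>F\<in>{F. F \<in> {F\<in>Pow (NS d). \<Union>F \<subseteq> T} \<and> \<Union>F = I}. wgt d p F)"
    unfolding qof_def by (intro sum.cong refl arg_cong2[where f=sum]) auto
  also have "\<dots> = (\<Sum>F\<in>{F\<in>Pow (NS d). \<Union>F \<subseteq> T}. wgt d p F)"
    by (rule sum.group) (auto simp: NS_def intro: finite_subset[of _ "Pow (NS d)"])
  also have "{F\<in>Pow (NS d). \<Union>F \<subseteq> T} = Pow NT" by (auto simp: NT_def)
  also have "(\<Sum>F\<in>Pow NT. wgt d p F)
      = (\<Sum>F\<in>Pow NT. ((\<Prod>J\<in>F. 1 - p J) * (\<Prod>J\<in>NT - F. p J)) * (\<Prod>J\<in>NS d - NT. p J))"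
  proof (intro sum.cong refl)
    fix F assume "F \<in> Pow NT"
    then have F: "F \<subseteq> NT" by simp
    have "NS d - F = (NT - F) \<union> (NS d - NT)" using F by (auto simp: NT_def)
    moreover have "(\<Prod>J\<in>(NT - F) \<union> (NS d - NT). p J) = (\<Prod>J\<in>NT - F. p J) * (\<Prod>J\<in>NS d - NT. p J)"
      by (rule prod.union_disjoint) (auto simp: NT_def)
    ultimately show "wgt d p F = ((\<Prod>J\<in>F. 1 - p J) * (\<Prod>J\<in>NT - F. p J)) * (\<Prod>J\<in>NS d - NT. p J)"
      by (simp add: wgt_def mult.assoc)
  qed
  also have "\<dots> = (\<Sum>F\<in>Pow NT. (\<Prod>J\<in>F. 1 - p J) * (\<Prod>J\<in>NT - F. p J)) * (\<Prod>J\<in>NS d - NT. p J)"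
    by (simp add: sum_distrib_right)
  also have "(\<Sum>F\<in>Pow NT. (\<Prod>J\<in>F. 1 - p J) * (\<Prod>J\<in>NT - F. p J)) = (\<Prod>J\<in>NT. (1 - p J) + p J)"
    by (rule prod_add[symmetric]) (rule finNT)
  also have "\<dots> = 1" by simp
  also have "NS d - NT = {J\<in>NS d. \<not> J \<subseteq> T}" by (auto simp: NT_def)
  finally show ?thesis by simp
qed

lemma qof_wide:
  assumes "narrow_params d p"
  shows "wide_params d (qof d p)"
proof -
  have p: "\<forall>I. I \<subseteq> {1..d} \<and> I \<noteq> {} \<longrightarrow> 0 \<le> p I \<and> p I \<le> 1"
    using assms by (simp add: narrow_params_def)
  have tot: "(\<Sum>I\<in>Pow {1..d}. qof d p I) = 1"
  proof -
    have "(\<Sum>I\<in>Pow {1..d}. qof d p I) = (\<Sum>I\<in>{I\<in>Pow {1..d}. I \<subseteq> {1..d}}. qof d p I)"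
      by (rule sum.cong) auto
    also have "\<dots> = (\<Prod>J\<in>{J\<in>NS d. \<not> J \<subseteq> {1..d}}. p J)" by (rule qof_key)
    also have "{J\<in>NS d. \<not> J \<subseteq> {1..d}} = {}" by (auto simp: NS_def)
    finally show ?thesis by simp
  qed
  have le1: "qof d p I \<le> 1" if "I \<subseteq> {1..d}" for I
  proof -
    have "qof d p I \<le> (\<Sum>I\<in>Pow {1..d}. qof d p I)"
      using that qof_nonneg[OF p] by (intro member_le_sum) auto
    then show ?thesis using tot by simp
  qed
  have k: "(\<Sum>I\<in>{I. I \<subseteq> {1..d} \<and> k \<notin> I}. qof d p I) < 1" if kd: "k \<in> {1..d}" for k
  proof -
    have "(\<Sum>I\<in>{I\<in>Pow {1..d}. I \<subseteq> {1..d} - {k}}. qof d p I) = (\<Prod>J\<in>{J\<in>NS d. \<not> J \<subseteq> {1..d} - {k}}. p J)"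
      by (rule qof_key)
    moreover have "{I\<in>Pow {1..d}. I \<subseteq> {1..d} - {k}} = {I. I \<subseteq> {1..d} \<and> k \<notin> I}" by auto
    moreover have "{J\<in>NS d. \<not> J \<subseteq> {1..d} - {k}} = {I. I \<subseteq> {1..d} \<and> k \<in> I}" by (auto simp: NS_def)
    ultimately show ?thesis using assms kd by (simp add: narrow_params_def)
  qed
  show ?thesis unfolding wide_params_def using qof_nonneg[OF p] le1 tot k by auto
qed

lemma prod_swap_count:
  assumes "narrow_params d p"
  shows "(\<Prod>i<(\<Sum>k\<in>{1..d}. n k). \<Prod>J\<in>{J\<in>NS d. \<not> J \<subseteq> {k. n k \<le> Suc i}}. p J)
       = (\<Prod>J\<in>NS d. p J ^ (Max (n ` J) - 1))"
proof -
  define m where "m = (\<Sum>k\<in>{1..d}. n k)"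
  have nm: "n k \<le> m" if "k \<in> {1..d}" for k
    unfolding m_def using that by (intro member_le_sum) auto
  have "(\<Prod>i<m. \<Prod>J\<in>{J\<in>NS d. \<not> J \<subseteq> {k. n k \<le> Suc i}}. p J)
      = (\<Prod>i<m. \<Prod>J\<in>NS d. if \<not> J \<subseteq> {k. n k \<le> Suc i} then p J else 1)"
  proof (rule prod.cong[OF refl])
    fix i
    show "(\<Prod>J\<in>{J\<in>NS d. \<not> J \<subseteq> {k. n k \<le> Suc i}}. p J) = (\<Prod>J\<in>NS d. if \<not> J \<subseteq> {k. n k \<le> Suc i} then p J else 1)"
      by (simp add: prod.inter_filter)
  qed
  also have "\<dots> = (\<Prod>J\<in>NS d. \<Prod>i<m. if \<not> J \<subseteq> {k. n k \<le> Suc i} then p J else 1)"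
    by (rule prod.swap)
  also have "\<dots> = (\<Prod>J\<in>NS d. p J ^ (Max (n ` J) - 1))"
  proof (intro prod.cong refl)
    fix J assume J: "J \<in> NS d"
    then have fJ: "finite J" "J \<noteq> {}" "J \<subseteq> {1..d}" by (auto simp: NS_def intro: finite_subset)
    have "{i\<in>{..<m}. \<not> J \<subseteq> {k. n k \<le> Suc i}} = {..<Max (n ` J) - 1}"
    proof (rule set_eqI)
      fix i
      obtain k where k: "k \<in> J" "Max (n ` J) = n k"
        using fJ by (metis (no_types, lifting) Max_in finite_imageI image_iff image_is_empty)
      have "(\<not> J \<subseteq> {k. n k \<le> Suc i}) \<longleftrightarrow> Suc i < Max (n ` J)"
        using fJ by (auto simp: Max_gr_iff not_le)
      moreover have "Max (n ` J) \<le> m" using k nm fJ by auto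
      ultimately show "i \<in> {i\<in>{..<m}. \<not> J \<subseteq> {k. n k \<le> Suc i}} \<longleftrightarrow> i \<in> {..<Max (n ` J) - 1}"
        by auto
    qed
    then show "(\<Prod>i<m. if \<not> J \<subseteq> {k. n k \<le> Suc i} then p J else 1) = p J ^ (Max (n ` J) - 1)"
      by (simp add: prod.inter_filter[symmetric])
  qed
  finally show ?thesis by (simp add: m_def)
qed

lemma narrow_is_wide:
  assumes "is_narrow_law d L"
  shows "is_wide_law d L"
proof -
  obtain p where p: "narrow_params d p" and L: "L = narrow_law d p"
    using assms by (auto simp: is_narrow_law_def)
  have pb: "\<forall>I. I \<subseteq> {1..d} \<and> I \<noteq> {} \<longrightarrow> 0 \<le> p I \<and> p I \<le> 1"
    using p by (simp add: narrow_params_def)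
  let ?q = "qof d p"
  have wq: "wide_params d ?q" using p by (rule qof_wide)
  have "narrow_law d p = wide_law d ?q"
  proof (rule law_eqI[of _ d])
    show "sets (narrow_law d p) = sets (law_space d)" by (simp add: narrow_law_def)
    show "sets (wide_law d ?q) = sets (law_space d)" by (simp add: wide_law_def)
    have "upset d (\<lambda>_. 0) = space (law_space d)" by (auto simp: upset_def enat_0)
    then show "emeasure (narrow_law d p) (space (law_space d)) \<noteq> \<infinity>"
      using narrow_survival[OF pb, of "\<lambda>_. 0"] by simp
  next
    fix n
    have "(\<Prod>i<(\<Sum>k\<in>{1..d}. n k). \<Sum>I\<in>{I\<in>Pow {1..d}. \<forall>k\<in>I. n k \<le> Suc i}. ?q I)
        = (\<Prod>i<(\<Sum>k\<in>{1..d}. n k). \<Prod>J\<in>{J\<in>NS d. \<not> J \<subseteq> {k. n k \<le> Suc i}}. p J)"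
    proof (intro prod.cong refl)
      fix i
      have "{I\<in>Pow {1..d}. \<forall>k\<in>I. n k \<le> Suc i} = {I\<in>Pow {1..d}. I \<subseteq> {k. n k \<le> Suc i}}" by auto
      then show "(\<Sum>I\<in>{I\<in>Pow {1..d}. \<forall>k\<in>I. n k \<le> Suc i}. ?q I) = (\<Prod>J\<in>{J\<in>NS d. \<not> J \<subseteq> {k. n k \<le> Suc i}}. p J)"
        using qof_key by simp
    qed
    then show "emeasure (narrow_law d p) (upset d n) = emeasure (wide_law d ?q) (upset d n)"
      using narrow_survival[OF pb] wide_survival[OF wq] prod_swap_count[OF p] by simp
  qed
  then show ?thesis using L wq by (auto simp: is_wide_law_def)
qed


definition q2 :: "nat set \<Rightarrow> real" where
  "q2 I = (if card I = 1 then 3/10 else 1/5)"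

lemma Pow12: "Pow {1..2::nat} = {{}, {1}, {2}, {1,2}}"
proof -
  have e: "{1..2::nat} = {1,2}" by auto
  show ?thesis unfolding e by (auto simp: Pow_insert)
qed

lemma sum_Pow12: "(\<Sum>I\<in>Pow {1..2::nat}. h I) = h {} + h {1} + h {2} + h {1,2}"
proof -
  have d: "{} \<notin> {{1},{2},{1,2::nat}}" "{1::nat} \<notin> {{2},{1,2}}" "{2::nat} \<notin> {{1,2}}" by auto
  show ?thesis unfolding Pow12 using d by (simp add: add.assoc)
qed

lemma wide_q2: "wide_params 2 q2"
proof -
  have k: "(\<Sum>I\<in>{I. I \<subseteq> {1..2} \<and> k \<notin> I}. q2 I) < 1" if "k \<in> {1..2::nat}" for k
  proof -
    have "(\<Sum>I\<in>{I. I \<subseteq> {1..2} \<and> k \<notin> I}. q2 I) = (\<Sum>I\<in>Pow {1..2::nat}. if k \<notin> I then q2 I else 0)"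
      by (simp add: sum.inter_filter[symmetric] Pow_def)
    also have "\<dots> = 1/2" unfolding sum_Pow12 using that by (cases "k = 1") (auto simp: q2_def)
    finally show ?thesis by simp
  qed
  show ?thesis unfolding wide_params_def
    using k unfolding sum_Pow12 by (auto simp: q2_def)
qed

definition L2 :: "(nat \<Rightarrow> enat) measure" where
  "L2 = wide_law 2 q2"

definition S2f :: "nat \<Rightarrow> nat \<Rightarrow> real" where
  "S2f u v = (1/2)^u * (1/2)^v * (4/5)^(min u v)"

lemma prod_if_pow: "u \<le> N \<Longrightarrow> (\<Prod>i<N. if i < u then c else 1) = (c::real)^u"
proof -
  assume "u \<le> N"
  then have "{i\<in>{..<N}. i < u} = {..<u}" by auto
  then show ?thesis by (simp add: prod.inter_filter[symmetric])
qed

lemma L2_survival: "emeasure L2 (upset 2 n) = ennreal (S2f (n 1 - 1) (n 2 - 1))"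
proof -
  define u where "u = n 1 - 1"
  define v where "v = n 2 - 1"
  define N where "N = (\<Sum>k\<in>{1..2::nat}. n k)"
  have N: "N = n 1 + n 2" by (simp add: N_def numeral_2_eq_2)
  have r: "(\<Sum>I\<in>{I\<in>Pow {1..2}. \<forall>k\<in>I. n k \<le> Suc i}. q2 I)
      = (if i < u then 1/2 else 1) * (if i < v then 1/2 else 1) * (if i < min u v then 4/5 else 1)" for i
  proof -
    have "(\<Sum>I\<in>{I\<in>Pow {1..2}. \<forall>k\<in>I. n k \<le> Suc i}. q2 I) = (\<Sum>I\<in>Pow {1..2::nat}. if \<forall>k\<in>I. n k \<le> Suc i then q2 I else 0)"
      by (simp add: sum.inter_filter[symmetric])
    also have "\<dots> = (if i < u then 1/2 else 1) * (if i < v then 1/2 else 1) * (if i < min u v then 4/5 else 1)"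
      unfolding sum_Pow12 by (auto simp: q2_def u_def v_def)
    finally show ?thesis .
  qed
  have "emeasure L2 (upset 2 n) = ennreal (\<Prod>i<N. (if i < u then 1/2 else 1) * (if i < v then 1/2 else 1) * (if i < min u v then 4/5 else 1))"
    unfolding L2_def wide_survival[OF wide_q2] N_def[symmetric] r ..
  also have "(\<Prod>i<N. (if i < u then 1/2 else 1) * (if i < v then 1/2 else 1) * (if i < min u v then 4/5 else 1))
     = (\<Prod>i<N. (if i < u then 1/2 else 1::real)) * (\<Prod>i<N. (if i < v then 1/2 else 1::real)) * (\<Prod>i<N. (if i < min u v then 4/5 else 1::real))"
    by (simp add: prod.distrib)
  also have "\<dots> = S2f u v"
    unfolding S2f_def using N u_def v_def by (subst (1 2 3) prod_if_pow) auto
  finally show ?thesis by (simp add: u_def v_def)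
qed


lemma sets_L2: "sets L2 = sets (law_space 2)" by (simp add: L2_def wide_law_def)
lemma space_L2: "space L2 = space (law_space 2)" by (simp add: L2_def wide_law_def)

lemma prob_L2: "prob_space L2"
  unfolding L2_def wide_law_wmap
  by (rule prob_space.prob_space_distr[OF prob_space.prob_space_stream_space[OF prob_space_measure_pmf] measurable_wmap])

lemma meas_L2: assumes "f \<in> space L2 \<rightarrow> space N" shows "f \<in> measurable L2 N"
proof -
  have "measurable L2 N = measurable (count_space (space L2)) N"
    by (rule measurable_cong_sets) (simp_all add: sets_L2 sets_law space_L2)
  then show ?thesis using assms by simp
qed

lemma ball12: "(\<forall>k\<in>{1..2::nat}. P k) \<longleftrightarrow> P 1 \<and> P 2"
proof -
  have "{1..2::nat} = {1,2}" by auto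
  then show ?thesis by simp
qed

lemma upset2: "upset 2 n = {x\<in>space (law_space 2). enat (n 1) \<le> x 1 \<and> enat (n 2) \<le> x 2}"
  unfolding upset_def ball12 by (rule refl)

lemma S2f_nonneg: "0 \<le> S2f u v" by (simp add: S2f_def)

lemma partA: "measure L2 {x \<in> space L2. enat n1 < x 1 \<and> enat n2 < x 2}
            = (1/2) ^ max n1 n2 * (2/5) ^ min n1 n2"
proof -
  have "{x \<in> space L2. enat n1 < x 1 \<and> enat n2 < x 2} = upset 2 (\<lambda>k. if k = 1 then Suc n1 else Suc n2)"
    by (auto simp: upset2 space_L2 Suc_ile_eq)
  then have "measure L2 {x \<in> space L2. enat n1 < x 1 \<and> enat n2 < x 2} = S2f n1 n2"
    using L2_survival[of "\<lambda>k. if k = 1 then Suc n1 else Suc n2"] S2f_nonneg[of n1 n2]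
    by (simp add: measure_def)
  also have "S2f n1 n2 = (1/2) ^ max n1 n2 * (2/5) ^ min n1 n2"
  proof -
    have e: "(1/2::real)^a * (4/5)^a = (2/5)^a" for a :: nat
      by (simp add: power_mult_distrib[symmetric])
    show ?thesis
    proof (cases "n1 \<le> n2")
      case True
      then have "S2f n1 n2 = ((1/2)^n1 * (4/5)^n1) * (1/2)^n2" by (simp add: S2f_def min_def)
      then show ?thesis using True by (simp add: e max_def min_def)
    next
      case False
      then have "S2f n1 n2 = ((1/2)^n2 * (4/5)^n2) * (1/2)^n1" by (simp add: S2f_def min_def)
      then show ?thesis using False by (simp add: e max_def min_def)
    qed
  qed
  finally show ?thesis .
qed

lemma partSym: "distr L2 L2 (\<lambda>x. x(1 := x 2, 2 := x 1)) = L2"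
proof -
  let ?sw = "\<lambda>x::nat\<Rightarrow>enat. x(1 := x 2, 2 := x 1)"
  interpret L: prob_space L2 by (rule prob_L2)
  have swsp: "?sw \<in> space L2 \<rightarrow> space L2"
    by (auto simp: space_L2 space_law PiE_iff extensional_def)
  have sw: "?sw \<in> measurable L2 L2" using swsp by (rule meas_L2)
  have "L2 = distr L2 L2 ?sw"
  proof (rule law_eqI[of _ 2])
    show "sets L2 = sets (law_space 2)" by (rule sets_L2)
    show "sets (distr L2 L2 ?sw) = sets (law_space 2)" by (simp add: sets_L2)
    show "emeasure L2 (space (law_space 2)) \<noteq> \<infinity>"
      using L.emeasure_space_1 by (simp add: space_L2)
  next
    fix n
    have U: "upset 2 n \<in> sets L2" by (auto simp: sets_L2 sets_law upset_def)
    have s1: "\<And>x::nat\<Rightarrow>enat. ?sw x 1 = x 2" by simp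
    have s2: "\<And>x::nat\<Rightarrow>enat. ?sw x 2 = x 1" by simp
    have "?sw -` upset 2 n \<inter> space L2 = {x\<in>space L2. enat (n 1) \<le> ?sw x 1 \<and> enat (n 2) \<le> ?sw x 2}"
      using swsp unfolding upset2 space_L2 by blast
    also have "\<dots> = {x\<in>space L2. enat (n 2) \<le> x 1 \<and> enat (n 1) \<le> x 2}"
      unfolding s1 s2 by blast
    also have "\<dots> = upset 2 (\<lambda>k. if k = 1 then n 2 else n 1)"
      unfolding upset2 space_L2 by simp
    finally have "?sw -` upset 2 n \<inter> space L2 = upset 2 (\<lambda>k. if k = 1 then n 2 else n 1)" .
    then have "emeasure (distr L2 L2 ?sw) (upset 2 n) = emeasure L2 (upset 2 (\<lambda>k. if k = 1 then n 2 else n 1))"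
      using sw U by (simp add: emeasure_distr)
    also have "\<dots> = emeasure L2 (upset 2 n)"
      by (simp add: L2_survival S2f_def min.commute mult.commute)
    finally show "emeasure L2 (upset 2 n) = emeasure (distr L2 L2 ?sw) (upset 2 n)" ..
  qed
  then show ?thesis ..
qed

lemma NS2: "NS 2 = {{1},{2},{1,2}}"
proof -
  have "NS 2 = Pow {1..2} - {{}}" by (auto simp: NS_def)
  also have "\<dots> = {{1},{2},{1,2}}" unfolding Pow12 by simp
  finally show ?thesis .
qed

lemma prod_NS2: "(\<Prod>I\<in>NS 2. h I) = h {1} * h {2} * h {1,2}"
proof -
  have d: "{1::nat} \<notin> {{2},{1,2}}" "{2::nat} \<notin> {{1,2}}" by auto
  show ?thesis unfolding NS2 using d by (simp add: mult.assoc)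
qed

lemma partNN: "\<not> is_narrow_law 2 L2"
proof
  assume "is_narrow_law 2 L2"
  then obtain p where p: "narrow_params 2 p" and L: "L2 = narrow_law 2 p"
    by (auto simp: is_narrow_law_def)
  have pb: "\<forall>I. I \<subseteq> {1..2} \<and> I \<noteq> {} \<longrightarrow> 0 \<le> p I \<and> p I \<le> 1"
    using p by (simp add: narrow_params_def)
  have b1: "0 \<le> p {1}" "p {1} \<le> 1" using pb by auto
  have b2: "0 \<le> p {2}" "p {2} \<le> 1" using pb by auto
  have b3: "0 \<le> p {1,2}" "p {1,2} \<le> 1" using pb by auto
  have eq: "(\<Prod>I\<in>NS 2. p I ^ (Max (n ` I) - 1)) = S2f (n 1 - 1) (n 2 - 1)" for n
  proof -
    have "ennreal (\<Prod>I\<in>NS 2. p I ^ (Max (n ` I) - 1)) = ennreal (S2f (n 1 - 1) (n 2 - 1))"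
      using narrow_survival[OF pb, of n] L2_survival[of n] L by simp
    moreover have "0 \<le> (\<Prod>I\<in>NS 2. p I ^ (Max (n ` I) - 1))"
      using pb by (intro prod_nonneg) (auto simp: NS_def)
    ultimately show ?thesis using S2f_nonneg by simp
  qed
  have e1: "p {1} * p {1,2} = 1/2"
    using eq[of "\<lambda>k. if k = 1 then 2 else 1"] by (simp add: prod_NS2 S2f_def)
  have e2: "p {2} * p {1,2} = 1/2"
    using eq[of "\<lambda>k. if k = 1 then 1 else 2"] by (simp add: prod_NS2 S2f_def)
  have e3: "p {1} * p {2} * p {1,2} = 1/5"
    using eq[of "\<lambda>k. 2"] by (simp add: prod_NS2 S2f_def)
  have "p {1,2} * (p {1} * p {2} * p {1,2}) = (p {1} * p {1,2}) * (p {2} * p {1,2})"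
    by (simp add: algebra_simps)
  then have "p {1,2} * (1/5) = 1/2 * (1/2)" unfolding e1 e2 e3 .
  then have "p {1,2} = 5/4" by simp
  then show False using b3 by simp
qed


lemma half_sums: "(\<lambda>n. (1/2::real)^n) sums 2"
  using geometric_sums[of "1/2::real"] by simp

lemma c_sums: "(\<lambda>b. S2f a b) sums ((5/3) * (1/2)^a + (1/3) * (1/5)^a)"
proof (induction a)
  case 0
  have "(\<lambda>b. S2f 0 b) = (\<lambda>b. (1/2)^b)" by (simp add: S2f_def)
  then show ?case using half_sums by simp
next
  case (Suc a)
  have f: "(\<lambda>b. S2f (Suc a) (Suc b)) = (\<lambda>b. S2f a b / 5)"
    by (simp add: S2f_def fun_eq_iff field_simps)
  have "(\<lambda>b. S2f a b / 5) sums (((5/3) * (1/2)^a + (1/3) * (1/5)^a) / 5)"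
    using Suc by (rule sums_divide)
  then have "(\<lambda>b. S2f (Suc a) (Suc b)) sums (((5/3) * (1/2)^a + (1/3) * (1/5)^a) / 5)"
    by (simp only: f)
  then have "(\<lambda>b. S2f (Suc a) b) sums (((5/3) * (1/2)^a + (1/3) * (1/5)^a) / 5 + S2f (Suc a) 0)"
    by (simp only: sums_Suc_iff)
  moreover have "((5/3) * (1/2)^a + (1/3) * (1/5)^a) / 5 + S2f (Suc a) 0
      = (5/3) * (1/2)^Suc a + (1/3) * (1/5)^Suc a"
    by (simp add: S2f_def field_simps)
  ultimately show ?case by simp
qed

lemma d_sums: "(\<lambda>b. (1/2::real)^(max a b)) sums ((real a + 2) * (1/2)^a)"
proof (induction a)
  case 0
  then show ?case using half_sums by simp
next
  case (Suc a)
  have f: "(\<lambda>b. (1/2::real)^(max (Suc a) (Suc b))) = (\<lambda>b. (1/2)^(max a b) / 2)"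
    by (simp add: fun_eq_iff)
  have "(\<lambda>b. (1/2::real)^(max a b) / 2) sums ((real a + 2) * (1/2)^a / 2)"
    using Suc by (rule sums_divide)
  then have "(\<lambda>b. (1/2::real)^(max (Suc a) (Suc b))) sums ((real a + 2) * (1/2)^a / 2)"
    by (simp only: f)
  then have "(\<lambda>b. (1/2::real)^(max (Suc a) b)) sums ((real a + 2) * (1/2)^a / 2 + (1/2)^(max (Suc a) 0))"
    by (rule iffD1[OF sums_Suc_iff[where f="\<lambda>b. (1/2::real)^(max (Suc a) b)"]])
  moreover have eq: "(real a + 2) * (1/2::real)^a / 2 + (1/2)^(max (Suc a) 0) = (real (Suc a) + 2) * (1/2)^Suc a"
    by (simp add: field_simps)
  ultimately show ?case by (simp only: eq)
qed

lemma c_total: "(\<lambda>a. (5/3) * (1/2::real)^a + (1/3) * (1/5)^a) sums (15/4)"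
proof -
  have "(\<lambda>a. (5/3) * (1/2::real)^a) sums ((5/3) * 2)" by (intro sums_mult half_sums)
  moreover have "(\<lambda>a. (1/3) * (1/5::real)^a) sums ((1/3) * (5/4))"
    using geometric_sums[of "1/5::real"] by (intro sums_mult) simp
  ultimately have "(\<lambda>a. (5/3) * (1/2::real)^a + (1/3) * (1/5)^a) sums ((5/3) * 2 + (1/3) * (5/4))"
    by (rule sums_add)
  then show ?thesis by simp
qed

lemma d_total: "(\<lambda>a. (real a + 2) * (1/2::real)^a) sums 6"
proof -
  have "(\<lambda>n. of_nat (Suc n) * (1/2::real)^n) sums (1 / (1 - 1/2)^2)"
    by (rule geometric_deriv_sums) simp
  then have "(\<lambda>n. real (Suc n) * (1/2::real)^n) sums 4" by (simp add: power2_eq_square)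
  then have "(\<lambda>n. real (Suc n) * (1/2::real)^n + (1/2)^n) sums (4 + 2)"
    using half_sums by (rule sums_add)
  moreover have "(\<lambda>n. real (Suc n) * (1/2::real)^n + (1/2)^n) = (\<lambda>a. (real a + 2) * (1/2::real)^a)"
    by (simp add: fun_eq_iff algebra_simps)
  ultimately show ?thesis by simp
qed

lemma ennreal_double_sum:
  assumes inner: "\<And>a. (\<lambda>b. f a b) sums c a" and outer: "c sums s"
    and nn: "\<And>a b. 0 \<le> f a b"
  shows "(\<Sum>a. \<Sum>b. ennreal (f a b)) = ennreal s"
proof -
  have cnn: "0 \<le> c a" for a
    using sums_unique[OF inner[of a]] sums_summable[OF inner[of a]] nn by (metis suminf_nonneg)
  have "(\<Sum>b. ennreal (f a b)) = ennreal (c a)" for a using nn inner by (rule suminf_ennreal_eq)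
  then have "(\<Sum>a. \<Sum>b. ennreal (f a b)) = (\<Sum>a. ennreal (c a))" by simp
  also have "\<dots> = ennreal s" using cnn outer by (rule suminf_ennreal_eq)
  finally show ?thesis .
qed


lemma sets_L2_all: "A \<subseteq> space L2 \<Longrightarrow> A \<in> sets L2"
  by (simp add: sets_L2 sets_law space_L2)

lemma enat_max_less: "enat (max a b) < x \<longleftrightarrow> enat a < x \<and> enat b < x"
  by (cases "a \<le> b"; simp add: max_def; meson enat_ord_simps(1) le_less_trans nat_le_linear)

lemma em_P1: "emeasure L2 {x\<in>space L2. enat a < x 1} = ennreal ((1/2)^a)"
proof -
  have "{x\<in>space L2. enat a < x 1} = upset 2 (\<lambda>k. if k = 1 then Suc a else 0)"
    by (auto simp: upset2 space_L2 Suc_ile_eq enat_0)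
  then show ?thesis by (simp add: L2_survival S2f_def)
qed

lemma em_P2: "emeasure L2 {x\<in>space L2. enat a < x 2} = ennreal ((1/2)^a)"
proof -
  have "{x\<in>space L2. enat a < x 2} = upset 2 (\<lambda>k. if k = 1 then 0 else Suc a)"
    by (auto simp: upset2 space_L2 Suc_ile_eq enat_0)
  then show ?thesis by (simp add: L2_survival S2f_def)
qed

lemma em_P12: "emeasure L2 {x\<in>space L2. enat a < x 1 \<and> enat b < x 2} = ennreal (S2f a b)"
proof -
  have "{x\<in>space L2. enat a < x 1 \<and> enat b < x 2} = upset 2 (\<lambda>k. if k = 1 then Suc a else Suc b)"
    by (auto simp: upset2 space_L2 Suc_ile_eq)
  then show ?thesis by (simp add: L2_survival)
qed

lemma em_P11: "emeasure L2 {x\<in>space L2. enat a < x 1 \<and> enat b < x 1} = ennreal ((1/2)^(max a b))"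
proof -
  have "{x\<in>space L2. enat a < x 1 \<and> enat b < x 1} = upset 2 (\<lambda>k. if k = 1 then Suc (max a b) else 0)"
    by (auto simp: upset2 space_L2 Suc_ile_eq enat_0 enat_max_less)
  then show ?thesis by (simp add: L2_survival S2f_def)
qed

lemma em_P22: "emeasure L2 {x\<in>space L2. enat a < x 2 \<and> enat b < x 2} = ennreal ((1/2)^(max a b))"
proof -
  have "{x\<in>space L2. enat a < x 2 \<and> enat b < x 2} = upset 2 (\<lambda>k. if k = 1 then 0 else Suc (max a b))"
    by (auto simp: upset2 space_L2 Suc_ile_eq enat_0 enat_max_less)
  then show ?thesis by (simp add: L2_survival S2f_def)
qed

lemma AE_fin:
  assumes P: "\<And>a. emeasure L2 {x\<in>space L2. enat a < x j} = ennreal ((1/2)^a)"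
  shows "AE x in L2. x j \<noteq> \<infinity>"
proof -
  interpret L: prob_space L2 by (rule prob_L2)
  let ?N = "{x\<in>space L2. x j = \<infinity>}"
  have N: "?N \<in> sets L2" by (rule sets_L2_all) auto
  have le: "measure L2 ?N \<le> (1/2)^a" for a
  proof -
    have "measure L2 ?N \<le> measure L2 {x\<in>space L2. enat a < x j}"
      by (rule L.finite_measure_mono) (auto intro: sets_L2_all)
    also have "\<dots> = (1/2)^a" using P[of a] by (simp add: measure_def)
    finally show ?thesis .
  qed
  have "(\<lambda>a. (1/2::real)^a) \<longlonglongrightarrow> 0" by (rule LIMSEQ_power_zero) simp
  then have "measure L2 ?N \<le> 0" by (rule LIMSEQ_le_const) (use le in auto)
  then have "measure L2 ?N = 0" using measure_nonneg[of L2 ?N] by linarith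
  then have "emeasure L2 ?N = 0" using N by (simp add: L.emeasure_eq_measure)
  then show ?thesis by (intro AE_I[OF _ _ N]) auto
qed

lemma AE_fin12: "AE x in L2. x 1 \<noteq> \<infinity> \<and> x 2 \<noteq> \<infinity>"
  using AE_fin[OF em_P1] AE_fin[OF em_P2] by (rule eventually_conj)

lemma bm_L2: "f \<in> borel_measurable L2" by (rule meas_L2) simp

lemma sum_ind1: "(\<Sum>a. (if a < s then c else 0::ennreal)) = of_nat s * c"
proof -
  have "(\<Sum>a. (if a < s then c else 0::ennreal)) = (\<Sum>a\<in>{..<s}. (if a < s then c else 0))"
    by (rule suminf_finite) auto
  also have "\<dots> = (\<Sum>a\<in>{..<s}. c)" by (rule sum.cong) auto
  finally show ?thesis by simp
qed

lemma nn_prod: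
  assumes fin: "AE x in L2. x i \<noteq> \<infinity> \<and> x j \<noteq> \<infinity>"
  shows "(\<integral>\<^sup>+x. ennreal (real (the_enat (x i)) * real (the_enat (x j))) \<partial>L2)
       = (\<Sum>a. \<Sum>b. emeasure L2 {x\<in>space L2. enat a < x i \<and> enat b < x j})"
proof -
  let ?A = "\<lambda>a b. {x\<in>space L2. enat a < x i \<and> enat b < x j}"
  have pt: "ennreal (real (the_enat (x i)) * real (the_enat (x j))) = (\<Sum>a. \<Sum>b. indicator (?A a b) x)"
    if x: "x \<in> space L2" "x i \<noteq> \<infinity> \<and> x j \<noteq> \<infinity>" for x
  proof -
    obtain s t where st: "x i = enat s" "x j = enat t" using x by auto
    have ind: "indicator (?A a b) x = (if b < t then (if a < s then 1 else 0) else 0::ennreal)" for a b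
      using x st by (auto simp: indicator_def)
    have "(\<Sum>a. \<Sum>b. indicator (?A a b) x) = (\<Sum>a. of_nat t * (if a < s then 1 else 0::ennreal))"
      unfolding ind sum_ind1 ..
    also have "\<dots> = (\<Sum>a. (if a < s then of_nat t else 0::ennreal))"
      by (intro suminf_cong) auto
    also have "\<dots> = of_nat s * of_nat t" by (rule sum_ind1)
    also have "\<dots> = ennreal (real s * real t)"
      by (simp add: ennreal_of_nat_eq_real_of_nat ennreal_mult)
    finally show ?thesis using st by simp
  qed
  have "(\<integral>\<^sup>+x. ennreal (real (the_enat (x i)) * real (the_enat (x j))) \<partial>L2)
      = (\<integral>\<^sup>+x. (\<Sum>a. \<Sum>b. indicator (?A a b) x) \<partial>L2)"
    by (rule nn_integral_cong_AE) (use AE_space fin in eventually_elim, use pt in auto)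
  also have "\<dots> = (\<Sum>a. \<integral>\<^sup>+x. (\<Sum>b. indicator (?A a b) x) \<partial>L2)"
    by (rule nn_integral_suminf) (rule bm_L2)
  also have "\<dots> = (\<Sum>a. \<Sum>b. \<integral>\<^sup>+x. indicator (?A a b) x \<partial>L2)"
    by (intro suminf_cong nn_integral_suminf bm_L2)
  also have "\<dots> = (\<Sum>a. \<Sum>b. emeasure L2 (?A a b))"
    by (intro suminf_cong nn_integral_indicator sets_L2_all) auto
  finally show ?thesis .
qed

lemma nn_single:
  assumes fin: "AE x in L2. x i \<noteq> \<infinity>"
  shows "(\<integral>\<^sup>+x. ennreal (real (the_enat (x i))) \<partial>L2) = (\<Sum>a. emeasure L2 {x\<in>space L2. enat a < x i})"
proof -
  let ?A = "\<lambda>a. {x\<in>space L2. enat a < x i}"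
  have pt: "ennreal (real (the_enat (x i))) = (\<Sum>a. indicator (?A a) x)"
    if x: "x \<in> space L2" "x i \<noteq> \<infinity>" for x
  proof -
    obtain s where st: "x i = enat s" using x by auto
    have ind: "indicator (?A a) x = (if a < s then 1 else 0::ennreal)" for a
      using x st by (auto simp: indicator_def)
    have "(\<Sum>a. indicator (?A a) x :: ennreal) = (\<Sum>a. (if a < s then 1 else 0::ennreal))"
      by (intro suminf_cong) (rule ind)
    also have "\<dots> = of_nat s * 1" by (rule sum_ind1)
    finally have "(\<Sum>a. indicator (?A a) x :: ennreal) = of_nat s * 1" .
    then show ?thesis using st by (simp add: ennreal_of_nat_eq_real_of_nat)
  qed
  have "(\<integral>\<^sup>+x. ennreal (real (the_enat (x i))) \<partial>L2) = (\<integral>\<^sup>+x. (\<Sum>a. indicator (?A a) x) \<partial>L2)"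
    by (rule nn_integral_cong_AE) (use AE_space fin in eventually_elim, use pt in auto)
  also have "\<dots> = (\<Sum>a. \<integral>\<^sup>+x. indicator (?A a) x \<partial>L2)"
    by (rule nn_integral_suminf) (rule bm_L2)
  also have "\<dots> = (\<Sum>a. emeasure L2 (?A a))"
    by (intro suminf_cong nn_integral_indicator sets_L2_all) auto
  finally show ?thesis .
qed


lemma hb_nn:
  assumes "(\<integral>\<^sup>+x. ennreal (f x) \<partial>L2) = ennreal c" "0 \<le> c" "\<And>x. 0 \<le> f x"
  shows "has_bochner_integral L2 f c"
  by (rule has_bochner_integral_nn_integral) (use assms bm_L2 in auto)

lemma hX: "has_bochner_integral L2 (\<lambda>x. real (the_enat (x 1))) 2"
proof (rule hb_nn)
  show "(\<integral>\<^sup>+x. ennreal (real (the_enat (x 1))) \<partial>L2) = ennreal 2"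
    unfolding nn_single[OF AE_fin[OF em_P1]] em_P1
    by (rule suminf_ennreal_eq) (auto intro: half_sums)
qed auto

lemma hY: "has_bochner_integral L2 (\<lambda>x. real (the_enat (x 2))) 2"
proof (rule hb_nn)
  show "(\<integral>\<^sup>+x. ennreal (real (the_enat (x 2))) \<partial>L2) = ennreal 2"
    unfolding nn_single[OF AE_fin[OF em_P2]] em_P2
    by (rule suminf_ennreal_eq) (auto intro: half_sums)
qed auto

lemma hXY: "has_bochner_integral L2 (\<lambda>x. real (the_enat (x 1)) * real (the_enat (x 2))) (15/4)"
proof (rule hb_nn)
  show "(\<integral>\<^sup>+x. ennreal (real (the_enat (x 1)) * real (the_enat (x 2))) \<partial>L2) = ennreal (15/4)"
    unfolding nn_prod[OF AE_fin12] em_P12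
    by (rule ennreal_double_sum[OF c_sums c_total S2f_nonneg])
qed auto

lemma hXX: "has_bochner_integral L2 (\<lambda>x. real (the_enat (x 1)) * real (the_enat (x 1))) 6"
proof (rule hb_nn)
  have ae: "AE x in L2. x 1 \<noteq> \<infinity> \<and> x 1 \<noteq> \<infinity>" using AE_fin[OF em_P1] by simp
  show "(\<integral>\<^sup>+x. ennreal (real (the_enat (x 1)) * real (the_enat (x 1))) \<partial>L2) = ennreal 6"
    unfolding nn_prod[OF ae] em_P11
    by (rule ennreal_double_sum[OF d_sums d_total]) simp
qed auto

lemma hYY: "has_bochner_integral L2 (\<lambda>x. real (the_enat (x 2)) * real (the_enat (x 2))) 6"
proof (rule hb_nn)
  have ae: "AE x in L2. x 2 \<noteq> \<infinity> \<and> x 2 \<noteq> \<infinity>" using AE_fin[OF em_P2] by simp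
  show "(\<integral>\<^sup>+x. ennreal (real (the_enat (x 2)) * real (the_enat (x 2))) \<partial>L2) = ennreal 6"
    unfolding nn_prod[OF ae] em_P22
    by (rule ennreal_double_sum[OF d_sums d_total]) simp
qed auto

lemma hC: "has_bochner_integral L2 (\<lambda>x. 4) (4::real)"
proof (rule hb_nn)
  interpret L: prob_space L2 by (rule prob_L2)
  show "(\<integral>\<^sup>+x. ennreal 4 \<partial>L2) = ennreal 4" by (simp add: L.emeasure_space_1)
qed auto

lemma cov_lemma:
  fixes U V :: "(nat \<Rightarrow> enat) \<Rightarrow> real" and r :: real
  assumes hU: "has_bochner_integral L2 U 2" and hV: "has_bochner_integral L2 V 2"
    and hUV: "has_bochner_integral L2 (\<lambda>x. U x * V x) r"
  shows "integral\<^sup>L L2 (\<lambda>x. (U x - 2) * (V x - 2)) = r - 4"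
proof -
  have h2U: "has_bochner_integral L2 (\<lambda>x. 2 * U x) (2 * 2)"
    by (rule has_bochner_integral_mult_right) (rule hU)
  have h2V: "has_bochner_integral L2 (\<lambda>x. 2 * V x) (2 * 2)"
    by (rule has_bochner_integral_mult_right) (rule hV)
  have "has_bochner_integral L2 (\<lambda>x. U x * V x - 2 * U x - 2 * V x + 4) (r - 2 * 2 - 2 * 2 + 4)"
    by (intro has_bochner_integral_add has_bochner_integral_diff hUV h2U h2V hC)
  then have "integral\<^sup>L L2 (\<lambda>x. U x * V x - 2 * U x - 2 * V x + 4) = r - 4"
    by (simp add: has_bochner_integral_integral_eq)
  moreover have "integral\<^sup>L L2 (\<lambda>x. (U x - 2) * (V x - 2)) = integral\<^sup>L L2 (\<lambda>x. U x * V x - 2 * U x - 2 * V x + 4)"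
    by (rule Bochner_Integration.integral_cong) (simp_all add: algebra_simps)
  ultimately show ?thesis by simp
qed

lemma partCorr: "correlation L2 (\<lambda>x. real (the_enat (x 1))) (\<lambda>x. real (the_enat (x 2))) = - 1/8"
proof -
  have iX: "integral\<^sup>L L2 (\<lambda>x. real (the_enat (x 1))) = 2" by (rule has_bochner_integral_integral_eq[OF hX])
  have iY: "integral\<^sup>L L2 (\<lambda>x. real (the_enat (x 2))) = 2" by (rule has_bochner_integral_integral_eq[OF hY])
  have c: "integral\<^sup>L L2 (\<lambda>x. (real (the_enat (x 1)) - 2) * (real (the_enat (x 2)) - 2)) = 15/4 - 4"
    by (rule cov_lemma[OF hX hY hXY])
  have vX: "integral\<^sup>L L2 (\<lambda>x. (real (the_enat (x 1)) - 2)^2) = 6 - 4"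
    unfolding power2_eq_square by (rule cov_lemma[OF hX hX hXX])
  have vY: "integral\<^sup>L L2 (\<lambda>x. (real (the_enat (x 2)) - 2)^2) = 6 - 4"
    unfolding power2_eq_square by (rule cov_lemma[OF hY hY hYY])
  have s: "sqrt ((6 - 4) * (6 - 4::real)) = 2" by (simp add: real_sqrt_mult_self)
  show ?thesis unfolding correlation_def Let_def iX iY c vX vY s by simp
qed


theorem mainTheorem11:
  shows "(\<forall>d L. is_narrow_law d L \<longrightarrow> is_wide_law d L) \<and>
    (\<exists>L. is_wide_law 2 L \<and>
       (\<forall>n1 n2 :: nat. measure L {x \<in> space L. enat n1 < x 1 \<and> enat n2 < x 2}
            = (1/2) ^ max n1 n2 * (2/5) ^ min n1 n2) \<and>
       distr L L (\<lambda>x. x(1 := x 2, 2 := x 1)) = L \<and>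
       \<not> is_narrow_law 2 L \<and>
       correlation L (\<lambda>x. real (the_enat (x 1))) (\<lambda>x. real (the_enat (x 2))) = - 1/8)"
proof
  show "\<forall>d L. is_narrow_law d L \<longrightarrow> is_wide_law d L" using narrow_is_wide by blast
next
  have w: "is_wide_law 2 L2" unfolding is_wide_law_def L2_def using wide_q2 by blast
  show "\<exists>L. is_wide_law 2 L \<and>
       (\<forall>n1 n2 :: nat. measure L {x \<in> space L. enat n1 < x 1 \<and> enat n2 < x 2}
            = (1/2) ^ max n1 n2 * (2/5) ^ min n1 n2) \<and>
       distr L L (\<lambda>x. x(1 := x 2, 2 := x 1)) = L \<and>
       \<not> is_narrow_law 2 L \<and>
       correlation L (\<lambda>x. real (the_enat (x 1))) (\<lambda>x. real (the_enat (x 2))) = - 1/8"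
    using w partA partSym partNN partCorr by blast
qed

end
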